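(* Let $G$ be a crossing closed graph on $[n]$, let $\unlhd$ be a total order on $E(G)$, and let $S$ be a noncrossing NBC set of $G$ (with respect to $\unlhd$). Viewing each edge of $S$ as the bond with that single edge, the join $\bigvee S$ computed in $L_G$ equals the join $\bigvee S$ computed in $NC_G$.
   Context: All graphs are finite simple graphs with vertex set $[n]=\{1,\dots,n\}$; edges are written $ij$ with $i<j$. Two edges $a_1a_2$ and $b_1b_2$ cross if $a_1<b_1<a_2<b_2$ or $b_1<a_1<b_2<a_2$. A spanning subgraph is identified with its edge set. A bond of $G$ is a spanning subgraph each of whose connected components is an induced subgraph of $G$; for a bond $H$, $\pi(H)$ is the partition of $[n]$ into vertex sets of its components. A set partition is crossing if there are distinct blocks $B,B'$ and $a,c\in B$, $b,d\in B'$ with $a<b<c<d$, noncrossing otherwise; $H$ is noncrossing if $\pi(H)$ is. $L_G$ is the lattice of all bonds ordered by inclusion of edge sets, $NC_G$ the subposet of noncrossing bonds. Two crossing edges $e,f$ are crossing closed if among all induced connected subgraphs of $G$ containing $e$ and $f$ there is a unique minimal one under containment; $G$ is crossing closed if every pair of crossing edges is (in which case $NC_G$ is a lattice). Given the total order $\unlhd$, a broken circuit is the edge set of a cycle of $G$ with its $\unlhd$-smallest edge removed; an NBC set is a set of edges containing no broken circuit; a noncrossing NBC set is an NBC set no two of whose edges cross. *)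

theory Defs
  imports Main
begin

type_synonym edge = "nat \<times> nat"

definition graph_on :: "nat \<Rightarrow> edge set \<Rightarrow> bool" where
  "graph_on n G \<longleftrightarrow> (\<forall>(i,j)\<in>G. 1 \<le> i \<and> i < j \<and> j \<le> n)"

definition mk_edge :: "nat \<Rightarrow> nat \<Rightarrow> edge" where
  "mk_edge u v = (min u v, max u v)"

definition adj :: "edge set \<Rightarrow> nat \<Rightarrow> nat \<Rightarrow> bool" where
  "adj H u v \<longleftrightarrow> (u, v) \<in> H \<or> (v, u) \<in> H"

definition component :: "nat \<Rightarrow> edge set \<Rightarrow> nat \<Rightarrow> nat set" where
  "component n H v = {u \<in> {1..n}. (adj H)\<^sup>*\<^sup>* v u}"

definition comp_partition :: "nat \<Rightarrow> edge set \<Rightarrow> nat set set" where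
  "comp_partition n H = component n H ` {1..n}"

definition is_bond :: "nat \<Rightarrow> edge set \<Rightarrow> edge set \<Rightarrow> bool" where
  "is_bond n G H \<longleftrightarrow> H \<subseteq> G \<and>
     (\<forall>C \<in> comp_partition n H. \<forall>(i,j)\<in>G. i \<in> C \<and> j \<in> C \<longrightarrow> (i,j) \<in> H)"

definition crossing_partition :: "nat set set \<Rightarrow> bool" where
  "crossing_partition P \<longleftrightarrow> (\<exists>B\<in>P. \<exists>B'\<in>P. B \<noteq> B' \<and>
     (\<exists>a\<in>B. \<exists>c\<in>B. \<exists>b\<in>B'. \<exists>d\<in>B'. a < b \<and> b < c \<and> c < d))"

definition bonds :: "nat \<Rightarrow> edge set \<Rightarrow> edge set set" where
  "bonds n G = {H. is_bond n G H}"

definition nc_bonds :: "nat \<Rightarrow> edge set \<Rightarrow> edge set set" where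
  "nc_bonds n G = {H. is_bond n G H \<and> \<not> crossing_partition (comp_partition n H)}"

definition edges_cross :: "edge \<Rightarrow> edge \<Rightarrow> bool" where
  "edges_cross e f \<longleftrightarrow> (case e of (a1,a2) \<Rightarrow> case f of (b1,b2) \<Rightarrow>
      (a1 < b1 \<and> b1 < a2 \<and> a2 < b2) \<or> (b1 < a1 \<and> a1 < b2 \<and> b2 < a2))"

text \<open>Induced subgraphs are identified with their vertex sets W \<subseteq> [n].\<close>
definition induced_edges :: "edge set \<Rightarrow> nat set \<Rightarrow> edge set" where
  "induced_edges G W = {(i,j) \<in> G. i \<in> W \<and> j \<in> W}"

definition induced_connected :: "nat \<Rightarrow> edge set \<Rightarrow> nat set \<Rightarrow> bool" where
  "induced_connected n G W \<longleftrightarrow> W \<noteq> {} \<and> W \<subseteq> {1..n} \<and>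
     (\<forall>u\<in>W. \<forall>v\<in>W. (adj (induced_edges G W))\<^sup>*\<^sup>* u v)"

definition contains_edges :: "nat set \<Rightarrow> edge \<Rightarrow> edge \<Rightarrow> bool" where
  "contains_edges W e f \<longleftrightarrow> fst e \<in> W \<and> snd e \<in> W \<and> fst f \<in> W \<and> snd f \<in> W"

definition minimal_conn_containing :: "nat \<Rightarrow> edge set \<Rightarrow> edge \<Rightarrow> edge \<Rightarrow> nat set \<Rightarrow> bool" where
  "minimal_conn_containing n G e f W \<longleftrightarrow>
     induced_connected n G W \<and> contains_edges W e f \<and>
     \<not> (\<exists>W'. W' \<subset> W \<and> induced_connected n G W' \<and> contains_edges W' e f)"

definition crossing_closed_pair :: "nat \<Rightarrow> edge set \<Rightarrow> edge \<Rightarrow> edge \<Rightarrow> bool" where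
  "crossing_closed_pair n G e f \<longleftrightarrow> (\<exists>!W. minimal_conn_containing n G e f W)"

definition crossing_closed :: "nat \<Rightarrow> edge set \<Rightarrow> bool" where
  "crossing_closed n G \<longleftrightarrow>
     (\<forall>e\<in>G. \<forall>f\<in>G. edges_cross e f \<longrightarrow> crossing_closed_pair n G e f)"

definition cycle_edges :: "edge set \<Rightarrow> edge set \<Rightarrow> bool" where
  "cycle_edges G C \<longleftrightarrow> (\<exists>vs. length vs \<ge> 3 \<and> distinct vs \<and>
     C = {mk_edge (vs ! i) (vs ! ((i + 1) mod length vs)) | i. i < length vs} \<and> C \<subseteq> G)"

text \<open>ord is a total order (reflexive relation) on E(G); (e,f) \<in> ord means e \<unlhd> f.\<close>
definition broken_circuit :: "edge set \<Rightarrow> edge rel \<Rightarrow> edge set \<Rightarrow> bool" where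
  "broken_circuit G ord B \<longleftrightarrow> (\<exists>C e. cycle_edges G C \<and> e \<in> C \<and>
     (\<forall>f\<in>C. (e, f) \<in> ord) \<and> B = C - {e})"

definition nbc_set :: "edge set \<Rightarrow> edge rel \<Rightarrow> edge set \<Rightarrow> bool" where
  "nbc_set G ord S \<longleftrightarrow> S \<subseteq> G \<and> \<not> (\<exists>B. broken_circuit G ord B \<and> B \<subseteq> S)"

definition nc_nbc_set :: "edge set \<Rightarrow> edge rel \<Rightarrow> edge set \<Rightarrow> bool" where
  "nc_nbc_set G ord S \<longleftrightarrow> nbc_set G ord S \<and> (\<forall>e\<in>S. \<forall>f\<in>S. \<not> edges_cross e f)"

definition is_join_in :: "edge set set \<Rightarrow> edge set set \<Rightarrow> edge set \<Rightarrow> bool" where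
  "is_join_in P X J \<longleftrightarrow> J \<in> P \<and> (\<forall>x\<in>X. x \<subseteq> J) \<and>
     (\<forall>K\<in>P. (\<forall>x\<in>X. x \<subseteq> K) \<longrightarrow> J \<subseteq> K)"

end

theory Submission
  imports Defs
begin

lemma adj_sym: "adj H u v \<Longrightarrow> adj H v u"
  by (auto simp: adj_def)

lemma conn_sym: "(adj H)\<^sup>*\<^sup>* x y \<Longrightarrow> (adj H)\<^sup>*\<^sup>* y x"
proof (induction rule: rtranclp_induct)
  case base then show ?case by simp
next
  case (step y z)
  then show ?case by (meson adj_sym converse_rtranclp_into_rtranclp)
qed

lemma walk_edge:
  assumes ord: "\<forall>(i,j)\<in>S. i < j"
  shows "(adj S)\<^sup>*\<^sup>* x y \<Longrightarrow> x < b \<Longrightarrow> b < y \<Longrightarrow> \<not> (adj S)\<^sup>*\<^sup>* x b \<Longrightarrow>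
    \<exists>p q. (p,q) \<in> S \<and> p < b \<and> b < q \<and> (adj S)\<^sup>*\<^sup>* x p \<and> (adj S)\<^sup>*\<^sup>* x q"
proof (induction rule: rtranclp_induct)
  case base then show ?case by simp
next
  case (step y z)
  show ?case
  proof (cases "y < b")
    case True
    have "y < z" using True step(5) by simp
    have "(y,z) \<in> S" using step(2) \<open>y < z\<close> ord by (auto simp: adj_def)
    moreover have "(adj S)\<^sup>*\<^sup>* x z" using step(1,2) by (meson rtranclp.rtrancl_into_rtrancl)
    ultimately show ?thesis using True step by blast
  next
    case False
    then have "b < y" using step by (metis linorder_neqE_nat)
    then show ?thesis using step by blast
  qed
qed

lemma walk_stay:
  assumes ord: "\<forall>(i,j)\<in>S. i < j"
    and nc: "\<forall>e\<in>S. \<forall>f\<in>S. \<not> edges_cross e f"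
    and uv: "(u,v) \<in> S"
  shows "(adj S)\<^sup>*\<^sup>* x y \<Longrightarrow> u < x \<Longrightarrow> x < v \<Longrightarrow>
    (u < y \<and> y < v) \<or> (adj S)\<^sup>*\<^sup>* x u \<or> (adj S)\<^sup>*\<^sup>* x v"
proof (induction rule: rtranclp_induct)
  case base then show ?case by simp
next
  case (step y z)
  from step(3)[OF step(4,5)] consider "u < y \<and> y < v" | "(adj S)\<^sup>*\<^sup>* x u" | "(adj S)\<^sup>*\<^sup>* x v"
    by blast
  then show ?case
  proof cases
    case 1
    show ?thesis
    proof (cases "z = u \<or> z = v")
      case True then show ?thesis using step(1,2) by (meson rtranclp.rtrancl_into_rtrancl)
    next
      case False
      show ?thesis
      proof (rule ccontr)
        assume nz: "\<not> ?thesis"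
        then have out: "z < u \<or> v < z" using False by auto
        from step(2) have "(y,z) \<in> S \<or> (z,y) \<in> S" by (auto simp: adj_def)
        then show False
        proof
          assume "(y,z) \<in> S"
          then have "y < z" using ord by auto
          then have "edges_cross (u,v) (y,z)" using out 1 by (auto simp: edges_cross_def)
          then show False using nc uv \<open>(y,z) \<in> S\<close> by blast
        next
          assume "(z,y) \<in> S"
          then have "z < y" using ord by auto
          then have "edges_cross (u,v) (z,y)" using out 1 by (auto simp: edges_cross_def)
          then show False using nc uv \<open>(z,y) \<in> S\<close> by blast
        qed
      qed
    qed
  qed auto
qed

lemma main_nc:
  assumes ord: "\<forall>(i,j)\<in>S. i < j"
    and nc: "\<forall>e\<in>S. \<forall>f\<in>S. \<not> edges_cross e f"
    and ac: "(adj S)\<^sup>*\<^sup>* a c" and bd: "(adj S)\<^sup>*\<^sup>* b d"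
    and lt: "a < b" "b < c" "c < d"
  shows "(adj S)\<^sup>*\<^sup>* a b"
proof (rule ccontr)
  let ?R = "(adj S)\<^sup>*\<^sup>*"
  have tr: "\<And>x y z. ?R x y \<Longrightarrow> ?R y z \<Longrightarrow> ?R x z" by (meson rtranclp_trans)
  have sy: "\<And>x y. ?R x y \<Longrightarrow> ?R y x" by (rule conn_sym)
  assume nab: "\<not> ?R a b"
  obtain u v where uv: "(u,v) \<in> S" "u < b" "b < v" "?R a u" "?R a v"
    using walk_edge[OF ord ac lt(1) lt(2) nab] by blast
  have nbu: "\<not> ?R b u" "\<not> ?R b v" using uv nab tr sy by blast+
  have "d < v"
  proof -
    have "d \<noteq> v" using uv nab bd tr sy by blast
    moreover have "\<not> v < d"
    proof
      assume "v < d"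
      then show False using walk_stay[OF ord nc uv(1) bd uv(2,3)] nbu by auto
    qed
    ultimately show ?thesis by auto
  qed
  have nbc: "\<not> ?R b c" using ac nab tr sy by blast
  obtain p q where pq: "(p,q) \<in> S" "p < c" "c < q" "?R b p" "?R b q"
    using walk_edge[OF ord bd lt(2) lt(3) nbc] by blast
  have "u < p" using walk_stay[OF ord nc uv(1) pq(4) uv(2,3)] nbu by auto
  have cu: "?R c u" using ac uv(4) tr sy by blast
  have "u < q" using \<open>u < p\<close> pq ord by auto
  have "?R c p \<or> ?R c q"
    using walk_stay[OF ord nc pq(1) cu pq(2,3)] \<open>u < p\<close> by auto
  then show False using pq nbc tr sy by blast
qed


lemma conn_mono: assumes AB: "A \<subseteq> B" shows "(adj A)\<^sup>*\<^sup>* x y \<Longrightarrow> (adj B)\<^sup>*\<^sup>* x y"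
proof (induction rule: rtranclp_induct)
  case base then show ?case by simp
next
  case (step y z)
  then have "adj B y z" using AB by (auto simp: adj_def)
  then show ?case using step by (meson rtranclp.rtrancl_into_rtrancl)
qed

lemma conn_closure:
  assumes "\<forall>(i,j)\<in>J. (adj S)\<^sup>*\<^sup>* i j"
  shows "(adj J)\<^sup>*\<^sup>* x y \<Longrightarrow> (adj S)\<^sup>*\<^sup>* x y"
proof (induction rule: rtranclp_induct)
  case base then show ?case by simp
next
  case (step y z)
  then have "(adj S)\<^sup>*\<^sup>* y z" using assms conn_sym by (auto simp: adj_def)
  then show ?case using step by (meson rtranclp_trans)
qed

theorem lemma3p8:
  fixes n :: nat and G :: "edge set" and ord :: "edge rel" and S :: "edge set"
  assumes "graph_on n G"
    and "crossing_closed n G"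
    and "linear_order_on G ord"
    and "nc_nbc_set G ord S"
  shows "\<exists>J. is_join_in (bonds n G) ((\<lambda>e. {e}) ` S) J \<and>
             is_join_in (nc_bonds n G) ((\<lambda>e. {e}) ` S) J"
proof -
  let ?R = "(adj S)\<^sup>*\<^sup>*"
  have SG: "S \<subseteq> G" using assms(4) by (auto simp: nc_nbc_set_def nbc_set_def)
  have nc: "\<forall>e\<in>S. \<forall>f\<in>S. \<not> edges_cross e f" using assms(4) by (auto simp: nc_nbc_set_def)
  have gG: "\<And>i j. (i,j) \<in> G \<Longrightarrow> 1 \<le> i \<and> i < j \<and> j \<le> n" using assms(1) by (auto simp: graph_on_def)
  have ordS: "\<forall>(i,j)\<in>S. i < j" using SG gG by auto
  define J where "J = {(i,j) \<in> G. ?R i j}"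
  have SJ: "S \<subseteq> J" unfolding J_def using SG by (auto simp: adj_def)
  have JG: "J \<subseteq> G" unfolding J_def by auto
  have Jc: "\<forall>(i,j)\<in>J. ?R i j" unfolding J_def by auto
  have conn: "\<And>x y. (adj J)\<^sup>*\<^sup>* x y \<longleftrightarrow> ?R x y"
    using conn_closure[OF Jc] conn_mono[OF SJ] by blast
  have bondJ: "is_bond n G J"
    unfolding is_bond_def
  proof (intro conjI JG)
    show "\<forall>C\<in>comp_partition n J. \<forall>(i, j)\<in>G. i \<in> C \<and> j \<in> C \<longrightarrow> (i, j) \<in> J"
    proof (clarify)
      fix C i j assume C: "C \<in> comp_partition n J" and e: "(i,j) \<in> G" and ij: "i \<in> C" "j \<in> C"
      obtain v where C': "C = component n J v" using C by (auto simp: comp_partition_def)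
      have "(adj J)\<^sup>*\<^sup>* v i" "(adj J)\<^sup>*\<^sup>* v j" using ij C' by (auto simp: component_def)
      then have "?R i j" using conn conn_sym by (meson rtranclp_trans)
      then show "(i, j) \<in> J" using e by (auto simp: J_def)
    qed
  qed
  have ncJ: "\<not> crossing_partition (comp_partition n J)"
  proof
    assume "crossing_partition (comp_partition n J)"
    then obtain B B' a b c d where BB: "B \<in> comp_partition n J" "B' \<in> comp_partition n J" "B \<noteq> B'"
      and abcd: "a \<in> B" "c \<in> B" "b \<in> B'" "d \<in> B'" "a < b" "b < c" "c < d"
      unfolding crossing_partition_def by blast
    obtain v where v: "B = component n J v" using BB by (auto simp: comp_partition_def)
    obtain w where w: "B' = component n J w" using BB by (auto simp: comp_partition_def)
    have va: "?R v a" "?R v c" "?R w b" "?R w d" using abcd v w conn by (auto simp: component_def)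
    have ac: "?R a c" "?R b d" using va conn_sym by (meson rtranclp_trans)+
    have "?R a b" using main_nc[OF ordS nc ac abcd(5-7)] .
    then have vw: "?R v w" using va conn_sym by (meson rtranclp_trans)
    have eqc: "\<And>u. (adj J)\<^sup>*\<^sup>* v u \<longleftrightarrow> (adj J)\<^sup>*\<^sup>* w u"
      using vw conn conn_sym by (meson rtranclp_trans)
    have "B = B'" unfolding v w component_def using eqc by simp
    then show False using BB by simp
  qed
  have least: "J \<subseteq> K" if K: "is_bond n G K" and SK: "S \<subseteq> K" for K
  proof
    fix e assume e: "e \<in> J"
    obtain i j where eij: "e = (i,j)" by fastforce
    have ij: "(i,j) \<in> G" "?R i j" using e eij by (auto simp: J_def)
    have rng: "i \<in> {1..n}" "j \<in> {1..n}" using gG[OF ij(1)] by auto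
    have "(adj K)\<^sup>*\<^sup>* i j" using conn_mono[OF SK ij(2)] .
    then have "i \<in> component n K i" "j \<in> component n K i" using rng by (auto simp: component_def)
    moreover have "component n K i \<in> comp_partition n K" using rng by (auto simp: comp_partition_def)
    ultimately have "(i,j) \<in> K" using K ij(1) unfolding is_bond_def by blast
    then show "e \<in> K" using eij by simp
  qed
  have ub: "\<forall>x\<in>(\<lambda>e. {e}) ` S. x \<subseteq> J" using SJ by auto
  have ubK: "\<And>K. (\<forall>x\<in>(\<lambda>e. {e}) ` S. x \<subseteq> K) \<Longrightarrow> S \<subseteq> K" by auto
  have "is_join_in (bonds n G) ((\<lambda>e. {e}) ` S) J"
    unfolding is_join_in_def bonds_def
  proof (intro conjI ballI impI)
    fix K assume "K \<in> {H. is_bond n G H}" "\<forall>x\<in>(\<lambda>e. {e}) ` S. x \<subseteq> K"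
    then show "J \<subseteq> K" using least ubK by simp
  qed (use bondJ ub in auto)
  moreover have "is_join_in (nc_bonds n G) ((\<lambda>e. {e}) ` S) J"
    unfolding is_join_in_def nc_bonds_def
  proof (intro conjI ballI impI)
    fix K assume "K \<in> {H. is_bond n G H \<and> \<not> crossing_partition (comp_partition n H)}" "\<forall>x\<in>(\<lambda>e. {e}) ` S. x \<subseteq> K"
    then show "J \<subseteq> K" using least ubK by simp
  qed (use bondJ ncJ ub in auto)
  ultimately show ?thesis by blast
qed

end
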